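(* Let $m\ge 1$ and $k\ge 2$. The coefficients $a_{k,l,r}$ satisfy, for all integers $l\ge 0$, $$a_{k,l,r}=a_{k-1,l-1,r+1}-(m-r-1)\,a_{k,l,r+1}\qquad(0\le r\le m-1),$$ $$a_{k,l,m}=a_{k-1,l,0}-m\,a_{k,l+1,0}.$$
   Context: Falling factorials are $(y)^{\underline 0}=1$ and $(y)^{\underline j}=y(y-1)\cdots(y-j+1)$. For $k\ge1$ let $q_k=\lfloor mk/(m+1)\rfloor$. The reals $a_{k,0,m}$ and $a_{k,l,r}$ ($1\le l\le q_k$, $0\le r\le m$) are the unique coefficients with $$\big((x-1)^{\underline m}\big)^k=a_{k,0,m}(x-1)^{\underline m}+\sum_{l=1}^{q_k}\sum_{r=0}^m a_{k,l,r}\big((x)^{\underline{m+1}}\big)^l(x+r-m-1)^{\underline r}$$ in $\mathbb{R}[x]$. By convention, $a_{k,l,r}=0$ for all index triples not covered by this expansion, namely when $l<0$, when $l>q_k$, or when $l=0$ and $r\neq m$. *)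

theory Defs
  imports Complex_Main "HOL-Computational_Algebra.Polynomial"
begin

definition ffall :: "nat \<Rightarrow> 'a::comm_ring_1 \<Rightarrow> 'a" where
  "ffall j y = (\<Prod>i<j. (y - of_nat i))"

definition qk :: "nat \<Rightarrow> nat \<Rightarrow> nat" where
  "qk m k = (m * k) div (m + 1)"

abbreviation pX :: "real poly" where "pX \<equiv> [:0, 1:]"

definition is_expansion :: "nat \<Rightarrow> nat \<Rightarrow> (int \<Rightarrow> nat \<Rightarrow> real) \<Rightarrow> bool" where
  "is_expansion m k c \<longleftrightarrow>
     (\<forall>l r. c l r \<noteq> 0 \<longrightarrow> ((l = 0 \<and> r = m) \<or> (1 \<le> l \<and> l \<le> int (qk m k) \<and> r \<le> m))) \<and>
     (ffall m (pX - 1)) ^ k =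
        smult (c 0 m) (ffall m (pX - 1)) +
        (\<Sum>l\<in>{1..qk m k}. \<Sum>r\<le>m.
            smult (c (int l) r) ((ffall (m + 1) pX) ^ l * ffall r (pX + of_nat r - of_nat m - 1)))"

text \<open>a_{k,l,r} (for fixed m): the unique such coefficients (zero outside the expansion range).\<close>
definition acoef :: "nat \<Rightarrow> nat \<Rightarrow> int \<Rightarrow> nat \<Rightarrow> real" where
  "acoef m k = (THE c. is_expansion m k c)"

end

theory Submission
  imports Defs
begin


definition GG :: "nat \<Rightarrow> nat \<Rightarrow> real poly" where
  "GG m r = ffall r (pX + of_nat r - of_nat m - 1)"
definition PP :: "nat \<Rightarrow> real poly" where "PP m = ffall (m + 1) pX"
definition FF :: "nat \<Rightarrow> real poly" where "FF m = ffall m (pX - 1)"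
definition TT :: "nat \<Rightarrow> nat \<times> nat \<Rightarrow> real poly" where
  "TT m i = PP m ^ fst i * GG m (snd i)"
definition Bx :: "nat \<Rightarrow> nat \<Rightarrow> (nat \<times> nat) set" where
  "Bx m L = {..L} \<times> {..m}"

lemma ffall_lin: "ffall j [:a, 1:] = (\<Prod>i<j. [:a - real i, 1:])"
  unfolding ffall_def by (intro prod.cong refl) (simp add: of_nat_poly)

lemma monic_lin_prod:
  "degree (\<Prod>i<j. [:f i, 1::real:]) = j \<and> lead_coeff (\<Prod>i<j. [:f i, 1::real:]) = 1"
proof -
  have d: "degree (\<Prod>i<j. [:f i, 1::real:]) = j" by (simp add: degree_prod_eq_sum_degree)
  have "lead_coeff (\<Prod>i<j. [:f i, 1::real:]) = (\<Prod>i<j. lead_coeff [:f i, 1::real:])"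
    by (rule lead_coeff_prod)
  also have "\<dots> = 1" by simp
  finally show ?thesis using d by simp
qed

lemma ffall_lin_deg: "degree (ffall j [:a, 1:]) = j" "lead_coeff (ffall j [:a, 1::real:]) = 1"
  by (unfold ffall_lin, rule conjunct1[OF monic_lin_prod], rule conjunct2[OF monic_lin_prod])

lemma GG_lin: "GG m r = ffall r [:real r - real m - 1, 1:]"
  unfolding GG_def by (simp add: of_nat_poly one_pCons algebra_simps)
lemma PP_lin: "PP m = ffall (m+1) [:0, 1:]" by (simp add: PP_def)
lemma FF_lin: "FF m = ffall m [:-1, 1:]" by (simp add: FF_def one_pCons)

lemma GG_deg: "degree (GG m r) = r" "lead_coeff (GG m r) = 1"
  unfolding GG_lin by (rule ffall_lin_deg)+
lemma PP_deg: "degree (PP m) = m + 1" "lead_coeff (PP m) = 1"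
  unfolding PP_lin by (rule ffall_lin_deg)+
lemma FF_deg: "degree (FF m) = m" "lead_coeff (FF m) = 1"
  unfolding FF_lin by (rule ffall_lin_deg)+
lemma FF_nz: "FF m \<noteq> 0" using FF_deg(2)[of m] by auto

lemma TT_deg: "degree (TT m (l, r)) = l * (m + 1) + r" "lead_coeff (TT m (l,r)) = 1"
proof -
  have "PP m \<noteq> 0" "GG m r \<noteq> 0" using PP_deg(2)[of m] GG_deg(2)[of m r] by auto
  then show "degree (TT m (l, r)) = l * (m + 1) + r" "lead_coeff (TT m (l,r)) = 1"
     apply (simp add: TT_def degree_mult_eq degree_power_eq PP_deg GG_deg)
    using PP_deg[of m] GG_deg[of m r] by (simp only: TT_def lead_coeff_mult lead_coeff_power fst_conv snd_conv) simp
qed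

lemma GG_m: "GG m m = FF m"
  unfolding GG_lin FF_lin ffall_lin by simp

lemma PP_FF: "PP m = pX * FF m"
  unfolding PP_lin FF_lin ffall_lin
  by (simp only: Suc_eq_plus1[symmetric] prod.lessThan_Suc_shift) (simp add: algebra_simps)

lemma GG_Suc: "GG m (Suc r) = [:real r - real m, 1:] * GG m r"
  unfolding GG_lin ffall_lin
  by (simp only: prod.lessThan_Suc_shift) (simp add: algebra_simps)

lemma pX_GG: "r < m \<Longrightarrow> pX * GG m r = GG m (Suc r) + smult (real (m - r)) (GG m r)"
  unfolding GG_Suc by (simp add: of_nat_diff algebra_simps flip: smult_add_left)


lemma TT_nz: "TT m i \<noteq> 0"
  using TT_deg(2)[of m "fst i" "snd i"] by (cases i) auto

lemma indep:
  fixes b :: "'i \<Rightarrow> real poly"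
  assumes fin: "finite S" and nz: "\<forall>i\<in>S. b i \<noteq> 0" and inj: "inj_on (\<lambda>i. degree (b i)) S"
    and z: "(\<Sum>i\<in>S. smult (f i) (b i)) = 0"
  shows "\<forall>i\<in>S. f i = 0"
proof (rule ccontr)
  assume nt: "\<not> (\<forall>i\<in>S. f i = 0)"
  define S' where "S' = {i\<in>S. f i \<noteq> 0}"
  have fS': "finite S'" using fin by (simp add: S'_def)
  have neS': "S' \<noteq> {}" using nt by (auto simp: S'_def)
  define D where "D = Max ((\<lambda>i. degree (b i)) ` S')"
  have "D \<in> (\<lambda>i. degree (b i)) ` S'" unfolding D_def using fS' neS' by (intro Max_in) auto
  then obtain i0 where i0: "i0 \<in> S'" "degree (b i0) = D" by auto
  have le: "\<And>i. i \<in> S' \<Longrightarrow> degree (b i) \<le> D" unfolding D_def using fS' by auto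
  have "(\<Sum>i\<in>S. smult (f i) (b i)) = (\<Sum>i\<in>S'. smult (f i) (b i))"
    using fin by (intro sum.mono_neutral_right) (auto simp: S'_def)
  then have "0 = coeff (\<Sum>i\<in>S'. smult (f i) (b i)) D" using z by simp
  also have "\<dots> = (\<Sum>i\<in>S'. f i * coeff (b i) D)" by (simp add: coeff_sum)
  also have "\<dots> = (\<Sum>i\<in>S'. if i = i0 then f i0 * coeff (b i0) D else 0)"
  proof (rule sum.cong[OF refl])
    fix i assume i: "i \<in> S'"
    show "f i * coeff (b i) D = (if i = i0 then f i0 * coeff (b i0) D else 0)"
    proof (cases "i = i0")
      case False
      have "degree (b i) \<noteq> D" using inj i i0 False unfolding inj_on_def S'_def by auto
      then have "degree (b i) < D" using le[OF i] by simp
      then show ?thesis using False by (simp add: coeff_eq_0)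
    qed simp
  qed
  also have "\<dots> = f i0 * coeff (b i0) D" using fS' i0(1) by simp
  finally have "f i0 * lead_coeff (b i0) = 0" using i0(2) by simp
  moreover have "f i0 \<noteq> 0" "b i0 \<noteq> 0" using i0(1) nz by (auto simp: S'_def)
  ultimately show False by simp
qed

lemma divmod1: "(r::nat) \<le> m \<Longrightarrow> (l * (m + 1) + r) div (m+1) = l \<and> (l * (m + 1) + r) mod (m+1) = r"
proof -
  assume "r \<le> m"
  then have r: "r < m + 1" by simp
  have e: "l * (m + 1) + r = r + l * (m+1)" by simp
  show ?thesis unfolding e using r
    by (simp only: div_mult_self1 mod_mult_self1 div_less mod_less) simp
qed

lemma divmod_eq: "(r::nat) \<le> m \<Longrightarrow> r' \<le> m \<Longrightarrow> l * (m + 1) + r = l' * (m + 1) + r' \<Longrightarrow> l = l' \<and> r = r'"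
proof -
  assume a: "r \<le> m" "r' \<le> m" "l * (m + 1) + r = l' * (m + 1) + r'"
  show ?thesis using divmod1[OF a(1), of l] divmod1[OF a(2), of l'] a(3) by metis
qed

lemma Bx_fin: "finite (Bx m L)" by (simp add: Bx_def)

lemma uniq:
  assumes "(\<Sum>i\<in>Bx m L. smult (f i) (TT m i)) = (\<Sum>i\<in>Bx m L. smult (g i) (TT m i))"
  shows "\<forall>i\<in>Bx m L. f i = g i"
proof -
  have "(\<Sum>i\<in>Bx m L. smult (f i - g i) (TT m i)) = 0"
    using assms by (simp add: smult_diff_left sum_subtractf)
  moreover have "inj_on (\<lambda>i. degree (TT m i)) (Bx m L)"
  proof (rule inj_onI)
    fix i j assume "i \<in> Bx m L" "j \<in> Bx m L" "degree (TT m i) = degree (TT m j)"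
    then show "i = j" using divmod_eq[of "snd i" m "snd j" "fst i" "fst j"]
      by (cases i, cases j) (simp add: Bx_def TT_deg)
  qed
  ultimately have "\<forall>i\<in>Bx m L. f i - g i = 0"
    using indep[of "Bx m L" "TT m" "\<lambda>i. f i - g i"] Bx_fin TT_nz by blast
  then show ?thesis by simp
qed

lemma sum_delta_smult:
  assumes "finite S" "i0 \<in> S"
  shows "(\<Sum>i\<in>S. smult (if i = i0 then c else 0) (T i)) = smult c (T i0)"
proof -
  have "(\<Sum>i\<in>S. smult (if i = i0 then c else 0) (T i)) = (\<Sum>i\<in>S. if i = i0 then smult c (T i) else 0)"
    by (intro sum.cong) auto
  also have "\<dots> = smult c (T i0)" using assms by simp
  finally show ?thesis .
qed

lemma exist:
  "degree p < (L+1)*(m+1) \<Longrightarrow> \<exists>f. p = (\<Sum>i\<in>Bx m L. smult (f i) (TT m i))"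
proof (induction "degree p" arbitrary: p rule: less_induct)
  case less
  show ?case
  proof (cases "p = 0")
    case True then show ?thesis by (intro exI[of _ "\<lambda>_. 0"]) simp
  next
    case False
    define D where "D = degree p"
    define i0 where "i0 = (D div (m+1), D mod (m+1))"
    have "D div (m+1) < L + 1" using less.prems unfolding D_def
      by (intro less_mult_imp_div_less) simp
    then have "D div (m+1) \<le> L" by simp
    then have i0B: "i0 \<in> Bx m L" by (auto simp: i0_def Bx_def)
    have e: "D div (m+1) * (m+1) + D mod (m+1) = D" by (rule div_mult_mod_eq)
    have degT: "degree (TT m i0) = D" "lead_coeff (TT m i0) = 1"
      using TT_deg[of m "D div (m+1)" "D mod (m+1)"] by (simp_all only: i0_def e)
    define p' where "p' = p - smult (lead_coeff p) (TT m i0)"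
    have "degree (smult (lead_coeff p) (TT m i0)) \<le> D" using degree_smult_le degT(1) by metis
    then have dle: "degree p' \<le> D" unfolding p'_def
      by (intro degree_diff_le) (simp_all add: D_def)
    have c0: "coeff p' D = 0" unfolding p'_def using degT by (simp add: D_def)
    have "p' = 0 \<or> degree p' < D"
    proof (rule ccontr)
      assume "\<not> ?thesis"
      then have "degree p' = D" "p' \<noteq> 0" using dle by auto
      then show False using c0 by (metis leading_coeff_0_iff)
    qed
    then obtain f' where f': "p' = (\<Sum>i\<in>Bx m L. smult (f' i) (TT m i))"
    proof
      assume "p' = 0" then show ?thesis using that[of "\<lambda>_. 0"] by simp
    next
      assume "degree p' < D"
      then show ?thesis using less.hyps[of p'] less.prems that unfolding D_def by auto
    qed
    define f where "f = (\<lambda>i. f' i + (if i = i0 then lead_coeff p else 0))"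
    have "(\<Sum>i\<in>Bx m L. smult (f i) (TT m i)) = (\<Sum>i\<in>Bx m L. smult (f' i) (TT m i))
           + (\<Sum>i\<in>Bx m L. smult (if i = i0 then lead_coeff p else 0) (TT m i))"
      unfolding f_def by (simp add: smult_add_left sum.distrib)
    also have "\<dots> = p' + smult (lead_coeff p) (TT m i0)"
      using sum_delta_smult[OF Bx_fin i0B] f' by simp
    also have "\<dots> = p" by (simp add: p'_def)
    finally show ?thesis by metis
  qed
qed




lemma smult_sum_right: "smult a (\<Sum>i\<in>S. f i) = (\<Sum>i\<in>S. smult a (f i))"
  by (induction S rule: infinite_finite_induct) (simp_all add: smult_add_right)

lemma inj_Bx: "inj_on (\<lambda>i. degree (TT m i)) (Bx m L)"
proof (rule inj_onI)
  fix i j assume "i \<in> Bx m L" "j \<in> Bx m L" "degree (TT m i) = degree (TT m j)"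
  then show "i = j" using divmod_eq[of "snd i" m "snd j" "fst i" "fst j"]
    by (cases i, cases j) (simp add: Bx_def TT_deg)
qed

lemma box_conv:
  fixes c :: "int \<Rightarrow> nat \<Rightarrow> real"
  assumes c0: "\<And>r. r \<noteq> m \<Longrightarrow> c 0 r = 0"
  shows "smult (c 0 m) (ffall m (pX - 1)) +
        (\<Sum>l\<in>{1..q}. \<Sum>r\<le>m.
            smult (c (int l) r) ((ffall (m + 1) pX) ^ l * ffall r (pX + of_nat r - of_nat m - 1)))
       = (\<Sum>i\<in>Bx m q. smult (c (int (fst i)) (snd i)) (TT m i))"
proof -
  have "(\<Sum>i\<in>Bx m q. smult (c (int (fst i)) (snd i)) (TT m i))
      = (\<Sum>l\<in>{0..q}. \<Sum>r\<le>m. smult (c (int l) r) (PP m ^ l * GG m r))"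
    unfolding Bx_def sum.cartesian_product' atMost_atLeast0 by (simp add: TT_def)
  also have "\<dots> = (\<Sum>r\<le>m. smult (c 0 r) (GG m r)) +
      (\<Sum>l\<in>{1..q}. \<Sum>r\<le>m. smult (c (int l) r) (PP m ^ l * GG m r))"
    by (subst sum.atLeast_Suc_atMost) simp_all
  also have "(\<Sum>r\<le>m. smult (c 0 r) (GG m r)) = (\<Sum>r\<le>m. if r = m then smult (c 0 m) (GG m m) else 0)"
    using c0 by (intro sum.cong) auto
  also have "\<dots> = smult (c 0 m) (FF m)" by (simp add: GG_m)
  finally show ?thesis by (simp add: FF_def PP_def GG_def)
qed

lemma supp:
  assumes "is_expansion m k c" "c l r \<noteq> 0"
  shows "0 \<le> l \<and> l \<le> int (qk m k) \<and> r \<le> m \<and> (l = 0 \<longrightarrow> r = m)"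
proof -
  have "(l = 0 \<and> r = m) \<or> (1 \<le> l \<and> l \<le> int (qk m k) \<and> r \<le> m)"
    using assms unfolding is_expansion_def by blast
  then show ?thesis by auto
qed

lemma exp_box:
  assumes "is_expansion m k c" "qk m k \<le> L"
  shows "(ffall m (pX - 1)) ^ k = (\<Sum>i\<in>Bx m L. smult (c (int (fst i)) (snd i)) (TT m i))"
proof -
  have c0: "\<And>r. r \<noteq> m \<Longrightarrow> c 0 r = 0" using supp[OF assms(1)] by blast
  have "(ffall m (pX - 1)) ^ k = (\<Sum>i\<in>Bx m (qk m k). smult (c (int (fst i)) (snd i)) (TT m i))"
    using assms(1) box_conv[where c=c and m=m and q="qk m k", OF c0] unfolding is_expansion_def by simp
  also have "\<dots> = (\<Sum>i\<in>Bx m L. smult (c (int (fst i)) (snd i)) (TT m i))"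
  proof (rule sum.mono_neutral_left)
    show "Bx m (qk m k) \<subseteq> Bx m L" using assms(2) by (auto simp: Bx_def)
    show "\<forall>i\<in>Bx m L - Bx m (qk m k). smult (c (int (fst i)) (snd i)) (TT m i) = 0"
    proof
      fix i assume "i \<in> Bx m L - Bx m (qk m k)"
      then have "\<not> (int (fst i) \<le> int (qk m k) \<and> snd i \<le> m)" by (auto simp: Bx_def)
      then have "c (int (fst i)) (snd i) = 0" using supp[OF assms(1), of "int (fst i)" "snd i"] by auto
      then show "smult (c (int (fst i)) (snd i)) (TT m i) = 0" by simp
    qed
  qed (simp add: Bx_fin)
  finally show ?thesis .
qed

lemma exp_unique:
  assumes "is_expansion m k c1" "is_expansion m k c2"
  shows "c1 = c2"
proof (intro ext)
  fix l r
  let ?q = "qk m k"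
  have e: "\<forall>i\<in>Bx m ?q. c1 (int (fst i)) (snd i) = c2 (int (fst i)) (snd i)"
  proof (rule uniq)
    show "(\<Sum>i\<in>Bx m ?q. smult (c1 (int (fst i)) (snd i)) (TT m i)) = (\<Sum>i\<in>Bx m ?q. smult (c2 (int (fst i)) (snd i)) (TT m i))"
      using exp_box[OF assms(1) order.refl] exp_box[OF assms(2) order.refl] by metis
  qed
  show "c1 l r = c2 l r"
  proof (cases "0 \<le> l \<and> l \<le> int ?q \<and> r \<le> m")
    case True
    then have "(nat l, r) \<in> Bx m ?q" by (auto simp: Bx_def)
    then have "c1 (int (fst (nat l, r))) (snd (nat l, r)) = c2 (int (fst (nat l, r))) (snd (nat l, r))"
      using e by blast
    then show ?thesis using True by simp
  next
    case False
    have "c1 l r = 0" using False supp[OF assms(1), of l r] by blast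
    moreover have "c2 l r = 0" using False supp[OF assms(2), of l r] by blast
    ultimately show ?thesis by simp
  qed
qed




lemma FF_dvd_TT: "fst i \<ge> 1 \<or> snd i = m \<Longrightarrow> FF m dvd TT m i"
proof -
  assume a: "fst i \<ge> 1 \<or> snd i = m"
  show ?thesis
  proof (cases "snd i = m")
    case True
    then show ?thesis by (simp add: TT_def GG_m)
  next
    case False
    then have "fst i = Suc (fst i - 1)" using a by simp
    then have "TT m i = PP m * (PP m ^ (fst i - 1) * GG m (snd i))"
      unfolding TT_def by (metis mult.assoc power_Suc)
    also have "\<dots> = FF m * (pX * (PP m ^ (fst i - 1) * GG m (snd i)))"
      by (simp only: PP_FF[of m] mult.assoc mult.left_commute[of pX "FF m"])
    finally show ?thesis by (simp only: dvd_triv_left)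
  qed
qed

lemma exp_exists:
  assumes "k \<ge> 1"
  shows "\<exists>c. is_expansion m k c"
proof -
  let ?q = "qk m k"
  let ?F = "(ffall m (pX - 1)) ^ k"
  have degF: "degree ?F = m * k"
    using FF_deg[of m] FF_nz[of m] by (simp add: FF_def degree_power_eq)
  define Q where "Q = (m * k) div (m+1)"
  define R where "R = (m * k) mod (m+1)"
  have "m * k = Q * (m+1) + R" unfolding Q_def R_def by (rule div_mult_mod_eq[symmetric])
  moreover have "R < m + 1" by (simp add: R_def)
  moreover have "(Q+1)*(m+1) = Q*(m+1)+(m+1)" by (simp only: distrib_right mult_1_left)
  ultimately have "m * k < (Q + 1) * (m + 1)" by linarith
  then have "m * k < (?q + 1) * (m + 1)" by (simp add: Q_def qk_def)
  then obtain f where f: "?F = (\<Sum>i\<in>Bx m ?q. smult (f i) (TT m i))"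
    using exist[of ?F ?q m] degF by auto
  define A0 where "A0 = {0::nat} \<times> {..<m}"
  have A0B: "A0 \<subseteq> Bx m ?q" by (auto simp: A0_def Bx_def)
  have fA0: "finite A0" by (simp add: A0_def)
  have split: "?F = (\<Sum>i\<in>Bx m ?q - A0. smult (f i) (TT m i)) + (\<Sum>i\<in>A0. smult (f i) (TT m i))"
    using f sum.subset_diff[OF A0B Bx_fin] by simp
  have d1: "FF m dvd (\<Sum>i\<in>Bx m ?q - A0. smult (f i) (TT m i))"
  proof (rule dvd_sum)
    fix i assume "i \<in> Bx m ?q - A0"
    then have "fst i \<ge> 1 \<or> snd i = m" by (cases i) (auto simp: A0_def Bx_def)
    then show "FF m dvd smult (f i) (TT m i)" using FF_dvd_TT by (simp add: dvd_smult)
  qed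
  have d2: "FF m dvd ?F" using assms by (simp add: FF_def dvd_power)
  have dA: "FF m dvd (\<Sum>i\<in>A0. smult (f i) (TT m i))"
  proof -
    have "FF m dvd (\<Sum>i\<in>Bx m ?q - A0. smult (f i) (TT m i)) + (\<Sum>i\<in>A0. smult (f i) (TT m i))"
      by (subst split[symmetric]) (rule d2)
    then show ?thesis using dvd_add_right_iff[OF d1] by blast
  qed
  have degA: "degree (\<Sum>i\<in>A0. smult (f i) (TT m i)) < m \<or> (\<Sum>i\<in>A0. smult (f i) (TT m i)) = 0"
  proof (cases "m = 0")
    case True then show ?thesis by (simp add: A0_def)
  next
    case False
    have "degree (\<Sum>i\<in>A0. smult (f i) (TT m i)) \<le> m - 1"
    proof (rule degree_sum_le[OF fA0])
      fix i assume "i \<in> A0"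
      then have "degree (TT m i) \<le> m - 1" by (cases i) (auto simp: A0_def TT_deg)
      then show "degree (smult (f i) (TT m i)) \<le> m - 1" using degree_smult_le order.trans by blast
    qed
    then show ?thesis using False by (intro disjI1) linarith
  qed
  have z: "(\<Sum>i\<in>A0. smult (f i) (TT m i)) = 0"
  proof (rule ccontr)
    assume nz: "(\<Sum>i\<in>A0. smult (f i) (TT m i)) \<noteq> 0"
    then have "degree (FF m) \<le> degree (\<Sum>i\<in>A0. smult (f i) (TT m i))"
      using dA dvd_imp_degree_le by blast
    then show False using degA nz FF_deg(1)[of m] by simp
  qed
  have f0: "\<forall>i\<in>A0. f i = 0"
    using indep[OF fA0 _ _ z] TT_nz inj_on_subset[OF inj_Bx A0B] by blast
  define c where "c = (\<lambda>(l::int) r. if 0 \<le> l \<and> nat l \<le> ?q \<and> r \<le> m then f (nat l, r) else 0)"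
  have c0: "\<And>r. r \<noteq> m \<Longrightarrow> c 0 r = 0"
  proof -
    fix r :: nat assume "r \<noteq> m"
    then show "c 0 r = 0" using f0 by (cases "r < m") (auto simp: c_def A0_def)
  qed
  have supp: "\<forall>l r. c l r \<noteq> 0 \<longrightarrow> ((l = 0 \<and> r = m) \<or> (1 \<le> l \<and> l \<le> int ?q \<and> r \<le> m))"
  proof (intro allI impI)
    fix l r assume nz: "c l r \<noteq> 0"
    then have a: "0 \<le> l" "nat l \<le> ?q" "r \<le> m" by (auto simp: c_def split: if_splits)
    show "(l = 0 \<and> r = m) \<or> (1 \<le> l \<and> l \<le> int ?q \<and> r \<le> m)"
    proof (cases "l = 0")
      case True then show ?thesis using nz c0 by auto
    next
      case False then show ?thesis using a by linarith
    qed
  qed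
  have "?F = (\<Sum>i\<in>Bx m ?q. smult (c (int (fst i)) (snd i)) (TT m i))"
    unfolding f by (intro sum.cong refl) (auto simp: c_def Bx_def)
  also have "\<dots> = smult (c 0 m) (ffall m (pX - 1)) +
        (\<Sum>l\<in>{1..?q}. \<Sum>r\<le>m.
            smult (c (int l) r) ((ffall (m + 1) pX) ^ l * ffall r (pX + of_nat r - of_nat m - 1)))"
    using box_conv[where c=c and m=m and q="?q", OF c0] by simp
  finally have "is_expansion m k c" using supp unfolding is_expansion_def by blast
  then show ?thesis by blast
qed

lemma acoef_exp: "k \<ge> 1 \<Longrightarrow> is_expansion m k (acoef m k)"
proof -
  assume "k \<ge> 1"
  then have "\<exists>!c. is_expansion m k c" using exp_exists[of k m] exp_unique[of m k] by (intro ex_ex1I)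
  then show ?thesis unfolding acoef_def by (rule theI')
qed




lemma ac4: "(a::'a::comm_ring_1) * (x * f) * g = f * (a * (x * g))"
  by (simp add: ac_simps)

lemma GG_0: "GG m 0 = 1" by (simp add: GG_def ffall_def)

lemma main:
  fixes m k :: nat
  assumes m1: "m \<ge> 1" and k2: "k \<ge> 2"
  shows "(\<forall>l::int. l \<ge> 0 \<longrightarrow> (\<forall>r<m.
            acoef m k l r = acoef m (k - 1) (l - 1) (r + 1) - real (m - r - 1) * acoef m k l (r + 1)))
       \<and> (\<forall>l::int. l \<ge> 0 \<longrightarrow>
            acoef m k l m = acoef m (k - 1) l 0 - real m * acoef m k (l + 1) 0)"
proof -
  define c where "c = acoef m k"
  define c' where "c' = acoef m (k - 1)"
  have ec: "is_expansion m k c" unfolding c_def using k2 by (intro acoef_exp) simp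
  have ec': "is_expansion m (k - 1) c'" unfolding c'_def using k2 by (intro acoef_exp) simp
  define L where "L = qk m k"
  have qle: "qk m (k - 1) \<le> L" unfolding L_def qk_def by (intro div_le_mono) simp
  define cn where "cn = (\<lambda>i. c (int (fst i)) (snd i))"
  define c'n where "c'n = (\<lambda>i. c' (int (fst i)) (snd i))"
  have Fk: "(ffall m (pX - 1)) ^ k = (\<Sum>i\<in>Bx m L. smult (cn i) (TT m i))"
    unfolding cn_def L_def by (rule exp_box[OF ec order.refl])
  have Fk1: "(ffall m (pX - 1)) ^ (k - 1) = (\<Sum>i\<in>Bx m L. smult (c'n i) (TT m i))"
    unfolding c'n_def by (rule exp_box[OF ec' qle])
  have cn_out: "cn (l, r) = 0" if "\<not> (l \<le> L \<and> r \<le> m)" for l r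
    using supp[OF ec, of "int l" r] that by (auto simp: cn_def L_def)
  have c'n_out: "c'n (l, r) = 0" if "\<not> (l \<le> L \<and> r \<le> m)" for l r
  proof -
    have "c' (int l) r = 0"
    proof (rule ccontr)
      assume "c' (int l) r \<noteq> 0"
      then have s: "0 \<le> int l \<and> int l \<le> int (qk m (k - 1)) \<and> r \<le> m \<and> (int l = 0 \<longrightarrow> r = m)"
        by (rule supp[OF ec'])
      then have "l \<le> qk m (k - 1)" "r \<le> m" by simp_all
      then have "l \<le> L \<and> r \<le> m" using qle by simp
      then show False using that by blast
    qed
    then show ?thesis by (simp add: c'n_def)
  qed
  have cn_0: "cn (0, r) = 0" if "r \<noteq> m" for r
    using supp[OF ec, of 0 r] that by (auto simp: cn_def)
  define U where "U = (\<lambda>i. if snd i = m then TT m (fst i, 0) else if fst i = 0 then 0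
      else TT m (fst i - 1, Suc (snd i)) + smult (real (m - snd i)) (TT m (fst i - 1, snd i)))"
  have TU: "smult (cn i) (TT m i) = FF m * smult (cn i) (U i)" if i: "i \<in> Bx m L" for i
  proof (cases "cn i = 0")
    case False
    obtain l r where lr: "i = (l, r)" by force
    have rm: "r \<le> m" using i lr by (auto simp: Bx_def)
    show ?thesis
    proof (cases "r = m")
      case True
      then have "TT m i = FF m * U i" using lr by (simp add: U_def TT_def GG_m GG_0 mult.commute)
      then show ?thesis by (simp add: mult_smult_right)
    next
      case rne: False
      then have l1: "l \<ge> 1" using False cn_0 lr by (cases l) auto
      have rlt: "r < m" using rm rne by simp
      have "TT m i = PP m ^ (l - 1) * PP m * GG m r"
        using l1 lr unfolding TT_def by (metis fst_conv snd_conv power_Suc2 Suc_diff_1 less_le_trans zero_less_one)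
      also have "\<dots> = FF m * (PP m ^ (l - 1) * (pX * GG m r))"
        unfolding PP_FF[of m] by (rule ac4)
      also have "\<dots> = FF m * U i"
        unfolding pX_GG[OF rlt] using lr rne l1 by (simp add: U_def TT_def distrib_left mult_smult_right)
      finally show ?thesis by (simp add: mult_smult_right)
    qed
  qed simp
  have "(ffall m (pX - 1)) ^ k = FF m * (ffall m (pX - 1)) ^ (k - 1)"
    using k2 by (simp add: FF_def power_Suc[symmetric] del: power_Suc)
  then have "FF m * (\<Sum>i\<in>Bx m L. smult (c'n i) (TT m i)) = FF m * (\<Sum>i\<in>Bx m L. smult (cn i) (U i))"
    using Fk Fk1 TU by (simp add: sum_distrib_left)
  then have eqU: "(\<Sum>i\<in>Bx m L. smult (c'n i) (TT m i)) = (\<Sum>i\<in>Bx m L. smult (cn i) (U i))"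
    using FF_nz[of m] by simp
  define w where "w = (\<lambda>(i::nat\<times>nat) (j::nat\<times>nat). if snd i = m then (if j = (fst i, 0) then 1 else 0)
         else if fst i = 0 then 0
         else (if j = (fst i - 1, Suc (snd i)) then 1 else 0) + (if j = (fst i - 1, snd i) then real (m - snd i) else 0))"
  have UW: "U i = (\<Sum>j\<in>Bx m L. smult (w i j) (TT m j))" if i: "i \<in> Bx m L" for i
  proof -
    obtain l r where lr: "i = (l, r)" by force
    have rl: "r \<le> m" "l \<le> L" using i lr by (auto simp: Bx_def)
    show ?thesis
    proof (cases "r = m")
      case True
      have "(l, 0) \<in> Bx m L" using rl by (simp add: Bx_def)
      then show ?thesis using True lr by (simp add: U_def w_def sum_delta_smult[OF Bx_fin])
    next
      case rne: False
      show ?thesis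
      proof (cases "l = 0")
        case True then show ?thesis using rne lr by (simp add: U_def w_def)
      next
        case False
        have m1: "(l - 1, Suc r) \<in> Bx m L" "(l - 1, r) \<in> Bx m L" using rl rne by (auto simp: Bx_def)
        have "(\<Sum>j\<in>Bx m L. smult (w i j) (TT m j)) =
           (\<Sum>j\<in>Bx m L. smult (if j = (l - 1, Suc r) then 1 else 0) (TT m j)) +
           (\<Sum>j\<in>Bx m L. smult (if j = (l - 1, r) then real (m - r) else 0) (TT m j))"
        proof -
          have wi: "\<And>j. w i j = (if j = (l - 1, Suc r) then 1 else 0) + (if j = (l - 1, r) then real (m - r) else 0)"
            unfolding lr w_def using rne False by simp
          show ?thesis by (simp only: wi smult_add_left sum.distrib)
        qed
        also have "\<dots> = U i"
          by (simp only: sum_delta_smult[OF Bx_fin m1(1)] sum_delta_smult[OF Bx_fin m1(2)] smult_1_left)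
            (simp add: U_def lr rne False)
        finally show ?thesis by simp
      qed
    qed
  qed
  define e where "e = (\<lambda>j. \<Sum>i\<in>Bx m L. cn i * w i j)"
  have "(\<Sum>i\<in>Bx m L. smult (cn i) (U i)) = (\<Sum>i\<in>Bx m L. \<Sum>j\<in>Bx m L. smult (cn i * w i j) (TT m j))"
    using UW by (intro sum.cong refl) (simp add: smult_sum_right)
  also have "\<dots> = (\<Sum>j\<in>Bx m L. smult (e j) (TT m j))"
    unfolding e_def smult_sum by (rule sum.swap)
  finally have "\<forall>j\<in>Bx m L. c'n j = e j" using eqU by (intro uniq) simp
  then have ce: "c'n j = e j" if "j \<in> Bx m L" for j using that by blast
  have ea: "e (n, Suc r) = cn (Suc n, r) + real (m - Suc r) * cn (Suc n, Suc r)" if "r < m" for n r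
  proof -
    have "e (n, Suc r) = (\<Sum>i\<in>Bx m L. (if i = (Suc n, r) then cn i else 0)
           + (if i = (Suc n, Suc r) then real (m - Suc r) * cn i else 0))"
      unfolding e_def
    proof (intro sum.cong refl)
      fix i :: "nat \<times> nat"
      obtain l s where ls: "i = (l, s)" by force
      show "cn i * w i (n, Suc r) = (if i = (Suc n, r) then cn i else 0)
           + (if i = (Suc n, Suc r) then real (m - Suc r) * cn i else 0)"
        using that unfolding ls w_def by auto
    qed
    also have "\<dots> = (if (Suc n, r) \<in> Bx m L then cn (Suc n, r) else 0) +
        (if (Suc n, Suc r) \<in> Bx m L then real (m - Suc r) * cn (Suc n, Suc r) else 0)"
      by (simp only: sum.distrib sum.delta[OF Bx_fin])
    also have "\<dots> = cn (Suc n, r) + real (m - Suc r) * cn (Suc n, Suc r)"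
      using cn_out[of "Suc n" r] cn_out[of "Suc n" "Suc r"] by (auto simp: Bx_def)
    finally show ?thesis .
  qed
  have eb: "e (n, 0) = cn (n, m) + real m * cn (Suc n, 0)" for n
  proof -
    have "e (n, 0) = (\<Sum>i\<in>Bx m L. (if i = (n, m) then cn i else 0)
           + (if i = (Suc n, 0) then real m * cn i else 0))"
      unfolding e_def
    proof (intro sum.cong refl)
      fix i :: "nat \<times> nat"
      obtain l s where ls: "i = (l, s)" by force
      show "cn i * w i (n, 0) = (if i = (n, m) then cn i else 0)
           + (if i = (Suc n, 0) then real m * cn i else 0)"
        using m1 unfolding ls w_def by auto
    qed
    also have "\<dots> = (if (n, m) \<in> Bx m L then cn (n, m) else 0) +
        (if (Suc n, 0) \<in> Bx m L then real m * cn (Suc n, 0) else 0)"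
      by (simp only: sum.distrib sum.delta[OF Bx_fin])
    also have "\<dots> = cn (n, m) + real m * cn (Suc n, 0)"
      using cn_out[of n m] cn_out[of "Suc n" 0] by (auto simp: Bx_def)
    finally show ?thesis .
  qed
  have P1: "acoef m k l r = acoef m (k - 1) (l - 1) (r + 1) - real (m - r - 1) * acoef m k l (r + 1)"
    if l0: "l \<ge> 0" and rm: "r < m" for l :: int and r
  proof -
    define n where "n = nat l"
    have n: "l = int n" using l0 by (simp add: n_def)
    show ?thesis
    proof (cases n)
      case 0
      have a: "c 0 r = 0" using cn_0[of r] rm by (simp add: cn_def)
      have b: "c' (-1) (r + 1) = 0"
      proof (rule ccontr)
        assume "c' (-1) (r + 1) \<noteq> 0"
        from supp[OF ec' this] show False by simp
      qed
      have d: "real (m - r - 1) * c 0 (r + 1) = 0"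
      proof (cases "r + 1 = m")
        case False then show ?thesis using cn_0[of "r+1"] by (simp add: cn_def)
      qed simp
      show ?thesis using a b d n 0 by (simp add: c_def c'_def)
    next
      case (Suc n')
      have l1: "l - 1 = int n'" "l = int (Suc n')" using n Suc by auto
      show ?thesis
      proof (cases "n' \<le> L")
        case True
        then have "(n', Suc r) \<in> Bx m L" using rm by (simp add: Bx_def)
        then have "c'n (n', Suc r) = cn (Suc n', r) + real (m - Suc r) * cn (Suc n', Suc r)"
          using ce ea[OF rm] by simp
        then show ?thesis unfolding l1 using rm by (simp add: c_def c'_def cn_def c'n_def)
      next
        case False
        have "c'n (n', Suc r) = 0" "cn (Suc n', r) = 0" "cn (Suc n', Suc r) = 0"
          using False c'n_out[of n' "Suc r"] cn_out[of "Suc n'" r] cn_out[of "Suc n'" "Suc r"] by simp_all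
        then show ?thesis unfolding l1 by (simp add: c_def c'_def cn_def c'n_def)
      qed
    qed
  qed
  have P2: "acoef m k l m = acoef m (k - 1) l 0 - real m * acoef m k (l + 1) 0"
    if l0: "l \<ge> 0" for l :: int
  proof -
    define n where "n = nat l"
    have n: "l = int n" using l0 by (simp add: n_def)
    have l1: "l + 1 = int (Suc n)" using n by simp
    show ?thesis
    proof (cases "n \<le> L")
      case True
      then have "(n, 0) \<in> Bx m L" by (simp add: Bx_def)
      then have "c'n (n, 0) = cn (n, m) + real m * cn (Suc n, 0)"
        using ce eb by simp
      then show ?thesis unfolding l1 n by (simp add: c_def c'_def cn_def c'n_def add.commute)
    next
      case False
      have "c'n (n, 0) = 0" "cn (n, m) = 0" "cn (Suc n, 0) = 0"
        using False c'n_out[of n 0] cn_out[of n m] cn_out[of "Suc n" 0] by simp_all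
      then show ?thesis unfolding l1 n by (simp add: c_def c'_def cn_def c'n_def add.commute)
    qed
  qed
  show ?thesis using P1 P2 by blast
qed


theorem lemma7p2:
  fixes m k :: nat
  assumes "m \<ge> 1" and "k \<ge> 2"
  shows "(\<forall>l::int. l \<ge> 0 \<longrightarrow> (\<forall>r<m.
            acoef m k l r = acoef m (k - 1) (l - 1) (r + 1) - real (m - r - 1) * acoef m k l (r + 1)))
       \<and> (\<forall>l::int. l \<ge> 0 \<longrightarrow>
            acoef m k l m = acoef m (k - 1) l 0 - real m * acoef m k (l + 1) 0)"
  using main[OF assms] .

end
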